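(* Let $d=1$, $c(x,y)=\frac12|x-y|^2$, $\nu=\frac12\delta_0+\frac12\delta_1$, let $p\in[1,\infty)$, and let $\mathcal P_{\mathrm{Lip}}(\mathbb{R})$ denote the set of probability measures on $\mathbb{R}$ with Lipschitz densities. Then there is a constant $c_p>0$ such that for all sufficiently large $n$, $$\inf_{T^{(n)}}\ \sup_{\mu\in\mathcal P_{\mathrm{Lip}}(\mathbb{R})}\ \mathbb{E}_\mu\Big[\big\|T^{(n)}-T_{\mu,\nu}\big\|^p_{L^p(\mu)}\Big]\ \ge\ \frac{c_p}{\sqrt n},$$ where the infimum is over all maps $T^{(n)}$ constructed (measurably) from $n$ i.i.d. samples of $\mu$.
   Context: $T_{\mu,\nu}$ denotes the optimal transport map from $\mu$ to $\nu$ for the quadratic cost (the unique, up to $\mu$-null sets, minimizer of $\int c(x,T(x))d\mu(x)$ among maps pushing $\mu$ to $\nu$). $\mathbb{E}_\mu$ denotes expectation over the $n$ i.i.d. samples drawn from $\mu$. *)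

theory Defs
  imports "HOL-Probability.Probability"
begin

definition nu_half :: "real measure" where
  "nu_half = distr (measure_pmf (bernoulli_pmf (1/2))) borel (\<lambda>b. if b then 1 else 0)"

definition P_Lip :: "real measure set" where
  "P_Lip = {M. prob_space M \<and>
      (\<exists>f :: real \<Rightarrow> real. (\<forall>x. 0 \<le> f x) \<and> (\<exists>L. L-lipschitz_on UNIV f) \<and>
                M = density lborel (\<lambda>x. ennreal (f x)))}"

definition ot_cost :: "real measure \<Rightarrow> (real \<Rightarrow> real) \<Rightarrow> ennreal" where
  "ot_cost \<mu> T = (\<integral>\<^sup>+ x. ennreal ((x - T x)\<^sup>2 / 2) \<partial>\<mu>)"

definition is_ot_map :: "real measure \<Rightarrow> real measure \<Rightarrow> (real \<Rightarrow> real) \<Rightarrow> bool" where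
  "is_ot_map \<mu> \<nu> T \<longleftrightarrow> T \<in> borel_measurable \<mu> \<and> distr \<mu> borel T = \<nu> \<and>
     (\<forall>S \<in> borel_measurable \<mu>. distr \<mu> borel S = \<nu> \<longrightarrow> ot_cost \<mu> T \<le> ot_cost \<mu> S)"

text \<open>An estimator built from n samples: a jointly measurable map (X, x) |-> Tn X x,
  where X ranges over sample vectors indexed by {..<n}.\<close>
definition estimator :: "nat \<Rightarrow> ((nat \<Rightarrow> real) \<Rightarrow> real \<Rightarrow> real) \<Rightarrow> bool" where
  "estimator n Tn \<longleftrightarrow>
     (\<lambda>(X, x). Tn X x) \<in> borel_measurable (PiM {..<n} (\<lambda>_. borel) \<Otimes>\<^sub>M borel)"

definition risk :: "real \<Rightarrow> nat \<Rightarrow> ((nat \<Rightarrow> real) \<Rightarrow> real \<Rightarrow> real) \<Rightarrow> real measure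
                     \<Rightarrow> (real \<Rightarrow> real) \<Rightarrow> ennreal" where
  "risk p n Tn \<mu> T0 =
     (\<integral>\<^sup>+ X. (\<integral>\<^sup>+ x. ennreal (\<bar>Tn X x - T0 x\<bar> powr p) \<partial>\<mu>) \<partial>(PiM {..<n} (\<lambda>_. \<mu>)))"

end

theory Submission
  imports Defs
begin

definition hat :: "real \<Rightarrow> real" where "hat x = max 0 (1 - \<bar>x\<bar>)"
definition bp :: "real \<Rightarrow> real" where "bp x = max 0 (1/2 - \<bar>x - 1/2\<bar>)"
definition bump :: "real \<Rightarrow> real" where "bump x = bp x - bp (-x)"

lemma bump_lip: "2-lipschitz_on UNIV bump"
  by (rule lipschitz_onI) (auto simp: bump_def bp_def dist_real_def max_def abs_if)

lemma nu_half_emeasure: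
  assumes "A \<in> sets borel"
  shows "emeasure nu_half A = (if (0::real) \<in> A then 1/2 else 0) + (if (1::real) \<in> A then 1/2 else 0)"
proof -
  have m: "(\<lambda>b::bool. if b then 1 else (0::real)) \<in> measurable (measure_pmf (bernoulli_pmf (1/2))) borel"
    by simp
  have "emeasure nu_half A = emeasure (measure_pmf (bernoulli_pmf (1/2))) ((\<lambda>b::bool. if b then 1 else (0::real)) -` A)"
    unfolding nu_half_def using assms m by (simp add: emeasure_distr)
  also have "\<dots> = (if (0::real) \<in> A then 1/2 else 0) + (if (1::real) \<in> A then 1/2 else 0)"
  proof -
    have e: "((\<lambda>b::bool. if b then 1 else (0::real)) -` A) = (if 0 \<in> A then {False} else {}) \<union> (if 1 \<in> A then {True} else {})"
      by (auto split: if_splits)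
    have U: "{True, False} = (UNIV::bool set)" by auto
    have h1: "(1/2::ennreal) + 1/2 = 1"
      by (metis ennreal_divide_numeral ennreal_plus field_sum_of_halves  ennreal_1 zero_le_divide_iff zero_le_one zero_le_numeral)
    have h2: "inverse (2::ennreal) = 1/2" by (simp add: divide_ennreal_def)
    have "emeasure (measure_pmf (bernoulli_pmf (1/2))) (UNIV::bool set) = 1"
      by (simp add: measure_pmf.emeasure_space_1[simplified])
    then show ?thesis unfolding e
      by (cases "(0::real) \<in> A"; cases "(1::real) \<in> A")
         (simp_all add: emeasure_pmf_single U h1 h2 ennreal_plus[symmetric] del: ennreal_plus)
  qed
  finally show ?thesis .
qed
lemma inv2: "inverse (2::ennreal) = 1/2" by (simp add: divide_ennreal_def)

lemma ennreal_half: "ennreal (1/2) = 1/2"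
  using ennreal_divide_numeral[of 1 "num.One"] by (simp add: inv2)

lemma ennreal_half_eq: "ennreal x = 1/2 \<Longrightarrow> 0 \<le> x \<Longrightarrow> x = 1/2"
  by (metis ennreal_half ennreal_inj zero_le_divide_iff zero_le_one zero_le_numeral)

lemma ot_threshold:
  fixes M :: "real measure" and m B :: real and T :: "real \<Rightarrow> real"
  assumes sM: "sets M = sets borel" and P: "prob_space M"
  and single: "emeasure M {m} = 0" and half: "emeasure M {..m} = 1/2"
  and bnd: "AE x in M. \<bar>x\<bar> \<le> B"
  and ot: "is_ot_map M nu_half T"
  shows "AE x in M. T x = (if m < x then 1 else 0)"
proof -
  interpret prob_space M by fact
  have spM: "space M = UNIV" using sets_eq_imp_space_eq[OF sM] by simp
  define S where "S x = (if m < x then 1 else (0::real))" for x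
  have Smeas: "S \<in> borel_measurable M"
  proof -
    have "(\<lambda>x. if m < x then 1 else (0::real)) \<in> borel_measurable borel" by measurable
    then show ?thesis by (subst measurable_cong_sets[OF sM refl]) (simp add: S_def[abs_def])
  qed
  have Tmeas: "T \<in> borel_measurable M" and dT: "distr M borel T = nu_half"
    using ot unfolding is_ot_map_def by auto
  have mM: "borel_measurable M = borel_measurable borel" by (rule measurable_cong_sets[OF sM refl])
  have Sb[measurable]: "S \<in> borel_measurable borel" using Smeas by (simp only: mM)
  have Tb[measurable]: "T \<in> borel_measurable borel" using Tmeas by (simp only: mM)
  have evA: "A \<in> sets M" if "A \<in> sets borel" for A using that sM by simp
  have mh: "measure M {..m} = 1/2" using half by (intro ennreal_half_eq) (simp_all add: emeasure_eq_measure)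
  have mu: "measure M {m<..} = 1/2"
  proof -
    have "space M - {..m} = {m<..}" using spM by auto
    then show ?thesis using prob_compl[of "{..m}"] mh evA by simp
  qed
  have muE: "emeasure M {m<..} = 1/2" using mu ennreal_half by (simp only: emeasure_eq_measure)
  have pushT: "emeasure M (T -` A) = emeasure nu_half A" if "A \<in> sets borel" for A
  proof -
    have "emeasure nu_half A = emeasure (distr M borel T) A" using dT by simp
    also have "\<dots> = emeasure M (T -` A \<inter> space M)" using that Tmeas by (simp add: emeasure_distr)
    finally show ?thesis using spM by simp
  qed
  have T01: "AE x in M. T x = 0 \<or> T x = 1"
  proof (rule AE_I')
    have "emeasure M (T -` (- {0,1})) = 0"
      using pushT[of "- {0,1}"] nu_half_emeasure[of "- {0,1}"] by simp
    moreover have "T -` (- {0,1}) \<in> sets M"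
      using measurable_sets[OF Tmeas, of "- {0,1}"] spM by simp
    ultimately show "T -` (- {0,1}) \<in> null_sets M" by auto
  qed auto
  have mT1: "measure M (T -` {1}) = 1/2"
  proof -
    have "emeasure M (T -` {1}) = 1/2"
      using pushT[of "{1}"] nu_half_emeasure[of "{1}"] by simp
    then show ?thesis by (intro ennreal_half_eq) (simp_all add: emeasure_eq_measure)
  qed
  have pushS: "distr M borel S = nu_half"
  proof (rule measure_eqI)
    show "sets (distr M borel S) = sets nu_half" by (simp add: nu_half_def)
    fix A assume "A \<in> sets (distr M borel S)"
    then have A: "A \<in> sets borel" by simp
    have "emeasure (distr M borel S) A = emeasure M (S -` A)"
      using A spM Smeas by (simp add: emeasure_distr)
    also have "\<dots> = emeasure nu_half A"
    proof -
      have e: "S -` A = (if 0 \<in> A then {..m} else {}) \<union> (if 1 \<in> A then {m<..} else {})"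
        by (auto simp: S_def split: if_splits)
      have "emeasure M ({..m} \<union> {m<..}) = emeasure M {..m} + emeasure M {m<..}"
        by (rule plus_emeasure[symmetric]) (auto simp: evA)
      then show ?thesis unfolding e nu_half_emeasure[OF A]
        using half muE by (cases "(0::real) \<in> A"; cases "(1::real) \<in> A") (simp_all add: inv2)
    qed
    finally show "emeasure (distr M borel S) A = emeasure nu_half A" .
  qed
  have cost: "ot_cost M T \<le> ot_cost M S"
    using ot Smeas pushS unfolding is_ot_map_def by blast
  define c1 where "c1 x = (x - T x)\<^sup>2 / 2" for x
  define c2 where "c2 x = (x - S x)\<^sup>2 / 2" for x
  define G where "G x = (if m < x \<and> T x = 0 then x - m else 0) + (if x \<le> m \<and> T x = 1 then m - x else 0)" for x
  have fin: "finite_measure M" by (rule finite_measure_axioms)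
  have bndT: "AE x in M. \<bar>T x\<bar> \<le> 1" using T01 by eventually_elim auto
  have bndS: "\<bar>S x\<bar> \<le> 1" for x by (simp add: S_def)
  have sqb: "\<bar>u\<bar> \<le> b \<Longrightarrow> u\<^sup>2 \<le> b\<^sup>2" for u b :: real
    by (metis abs_le_square_iff abs_of_nonneg abs_ge_zero order_trans)
  have ic1: "integrable M c1"
  proof (rule finite_measure.integrable_const_bound[OF fin, where B="(\<bar>B\<bar>+1)\<^sup>2/2"])
    show "AE x in M. norm (c1 x) \<le> (\<bar>B\<bar>+1)\<^sup>2/2" using bnd bndT
    proof eventually_elim
      case (elim x) then have "\<bar>x - T x\<bar> \<le> \<bar>B\<bar>+1" by linarith
      then show ?case using sqb by (auto simp: c1_def)
    qed
  qed (unfold c1_def[abs_def] mM, measurable)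
  have ic2: "integrable M c2"
  proof (rule finite_measure.integrable_const_bound[OF fin, where B="(\<bar>B\<bar>+1)\<^sup>2/2"])
    show "AE x in M. norm (c2 x) \<le> (\<bar>B\<bar>+1)\<^sup>2/2" using bnd
    proof eventually_elim
      case (elim x) then have "\<bar>x - S x\<bar> \<le> \<bar>B\<bar>+1" using bndS[of x] by linarith
      then show ?case using sqb by (auto simp: c2_def)
    qed
  qed (unfold c2_def[abs_def] mM, measurable)
  have iG: "integrable M G"
  proof (rule finite_measure.integrable_const_bound[OF fin, where B="2*(\<bar>B\<bar>+\<bar>m\<bar>)"])
    show "AE x in M. norm (G x) \<le> 2*(\<bar>B\<bar>+\<bar>m\<bar>)" using bnd
      by eventually_elim (auto simp: G_def)
  qed (unfold G_def[abs_def] mM, measurable)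
  have iT: "integrable M T"
    by (rule finite_measure.integrable_const_bound[OF fin, where B=1]) (use bndT Tmeas in auto)
  have iS: "integrable M S"
    by (rule finite_measure.integrable_const_bound[OF fin, where B=1]) (auto simp: bndS Smeas)
  have "ennreal (integral\<^sup>L M c1) \<le> ennreal (integral\<^sup>L M c2)"
  proof -
    have "ot_cost M T = ennreal (integral\<^sup>L M c1)"
      unfolding ot_cost_def c1_def[symmetric] by (rule nn_integral_eq_integral[OF ic1]) (simp add: c1_def)
    moreover have "ot_cost M S = ennreal (integral\<^sup>L M c2)"
      unfolding ot_cost_def c2_def[symmetric] by (rule nn_integral_eq_integral[OF ic2]) (simp add: c2_def)
    ultimately show ?thesis using cost by simp
  qed
  then have le: "integral\<^sup>L M c1 \<le> integral\<^sup>L M c2"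
    by (subst (asm) ennreal_le_iff) (auto intro!: integral_nonneg_AE simp: c2_def)
  have id: "AE x in M. c1 x = c2 x + G x + (m - 1/2) * (S x - T x)" using T01
    by eventually_elim (auto simp: c1_def c2_def G_def S_def power2_eq_square field_simps)
  have "integral\<^sup>L M c1 = integral\<^sup>L M (\<lambda>x. c2 x + G x + (m - 1/2) * (S x - T x))"
  proof (rule integral_cong_AE)
    have "integrable M (\<lambda>x. c2 x + G x + (m - 1/2) * (S x - T x))"
      using ic2 iG iS iT by simp
    then show "(\<lambda>x. c2 x + G x + (m - 1/2) * (S x - T x)) \<in> borel_measurable M"
      by (rule borel_measurable_integrable)
  qed (use id ic1 borel_measurable_integrable in auto)
  also have "\<dots> = integral\<^sup>L M c2 + integral\<^sup>L M G + (m - 1/2) * (integral\<^sup>L M S - integral\<^sup>L M T)"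
    using ic2 iG iS iT by simp
  finally have eq: "integral\<^sup>L M c1 = integral\<^sup>L M c2 + integral\<^sup>L M G + (m - 1/2) * (integral\<^sup>L M S - integral\<^sup>L M T)" .
  have intS: "integral\<^sup>L M S = 1/2"
  proof -
    have "S = indicator {m<..}" by (auto simp: S_def fun_eq_iff indicator_def)
    then show ?thesis using mu evA by simp
  qed
  have intT: "integral\<^sup>L M T = 1/2"
  proof -
    have "integral\<^sup>L M T = integral\<^sup>L M (indicator (T -` {1}))"
    proof (rule integral_cong_AE)
      have "T -` {1} \<in> sets M" using measurable_sets[OF Tmeas, of "{1}"] spM by simp
      then show "indicator (T -` {1}) \<in> borel_measurable M" by simp
    qed (use T01 Tmeas in \<open>auto simp: indicator_def\<close>)
    also have "\<dots> = measure M (T -` {1})"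
      using measurable_sets[OF Tmeas, of "{1}"] spM by simp
    finally show ?thesis using mT1 by simp
  qed
  have G0: "0 \<le> G x" for x by (auto simp: G_def)
  have "integral\<^sup>L M G \<le> 0" using eq le intS intT by simp
  moreover have "0 \<le> integral\<^sup>L M G" using G0 by (simp add: integral_nonneg)
  ultimately have "integral\<^sup>L M G = 0" by simp
  then have AG: "AE x in M. G x = 0"
    using integral_nonneg_eq_0_iff_AE[OF iG] G0 by simp
  have Am: "AE x in M. x \<noteq> m"
  proof (rule AE_I')
    show "{m} \<in> null_sets M" using single evA by auto
  qed auto
  show ?thesis using AG Am T01
  proof eventually_elim
    case (elim x)
    show ?case
    proof (cases "m < x")
      case True then show ?thesis using elim by (auto simp: G_def)
    next
      case False then have "x < m" using elim by simp
      then show ?thesis using elim by (auto simp: G_def)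
    qed
  qed
qed

definition Me :: "real \<Rightarrow> real measure" where
  "Me e = density lborel (\<lambda>x. ennreal (hat x + e * bump x))"

lemma hat_nonneg: "0 \<le> hat x" by (simp add: hat_def)
lemma hat_le1: "hat x \<le> 1" by (simp add: hat_def)
lemma bp_nonneg: "0 \<le> bp x" by (simp add: bp_def)
lemma bp_le: "bp x \<le> 1/2" by (auto simp: bp_def max_def)

lemma const_int: "(a::real) \<le> b \<Longrightarrow> ((\<lambda>x. c) has_integral (c * (b - a))) {a..b}"
  using has_integral_const_real[of c a b] by (simp add: mult.commute)
lemma bp_zero: "x \<le> 0 \<or> 1 \<le> x \<Longrightarrow> bp x = 0" by (auto simp: bp_def)
lemma bump_le: "\<bar>bump x\<bar> \<le> hat x"
  by (auto simp: bump_def bp_def hat_def abs_if max_def)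
lemma bump_pos: "0 \<le> x \<Longrightarrow> 0 \<le> bump x"
  using bp_zero[of "-x"] bp_nonneg[of x] by (simp add: bump_def)
lemma hat_zero: "1 \<le> \<bar>x\<bar> \<Longrightarrow> hat x = 0" by (simp add: hat_def)
lemma bump_zero: "1 \<le> \<bar>x\<bar> \<Longrightarrow> bump x = 0" using bump_le[of x] hat_zero[of x] by simp

lemma fe_nonneg: assumes "0 \<le> e" "e \<le> 1" shows "0 \<le> hat x + e * bump x"
proof -
  have "\<bar>e * bump x\<bar> \<le> e * hat x" using bump_le[of x] assms by (simp add: abs_mult mult_left_mono)
  moreover have "e * hat x \<le> hat x" using assms hat_nonneg[of x] by (simp add: mult_left_le_one_le)
  ultimately show ?thesis by linarith
qed

lemma hat_meas[measurable]: "hat \<in> borel_measurable borel" unfolding hat_def[abs_def] by measurable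
lemma bp_meas[measurable]: "bp \<in> borel_measurable borel" unfolding bp_def[abs_def] by measurable
lemma bump_meas[measurable]: "bump \<in> borel_measurable borel" unfolding bump_def[abs_def] by measurable

lemma hat_has_int1: "((\<lambda>x. 1 - \<bar>x\<bar>) has_integral (1/2)) {-1..0::real}"
proof -
  have "((\<lambda>x. 1 + x) has_integral (1 * (0 - (-1)) + (0\<^sup>2 - (-1)\<^sup>2)/2)) {-1..0::real}"
    by (intro has_integral_add const_int ident_has_integral) simp_all
  then show ?thesis by (subst has_integral_cong[where g="\<lambda>x. 1 + x"]) (auto simp: power2_eq_square)
qed

lemma hat_has_int2: "((\<lambda>x. 1 - \<bar>x\<bar>) has_integral (1/2)) {0..1::real}"
proof -
  have "((\<lambda>x. 1 - x) has_integral (1 * (1 - 0) - (1\<^sup>2 - 0\<^sup>2)/2)) {0..1::real}"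
    by (intro has_integral_diff const_int ident_has_integral) simp_all
  then show ?thesis by (subst has_integral_cong[where g="\<lambda>x. 1 - x"]) (auto simp: power2_eq_square)
qed

lemma hat_int: "(\<integral>\<^sup>+ x. ennreal (hat x) \<partial>lborel) = 1"
proof -
  have "((\<lambda>x. 1 - \<bar>x\<bar>) has_integral (1/2 + 1/2)) {-1..1::real}"
    by (rule has_integral_combine[OF _ _ hat_has_int1 hat_has_int2]) auto
  then have "(\<integral>\<^sup>+ x. ennreal (indicator {-1..1} x * (1 - \<bar>x\<bar>)) \<partial>lborel) = ennreal 1"
    by (intro nn_integral_has_integral_lebesgue) auto
  moreover have "indicator {-1..1} x * (1 - \<bar>x\<bar>) = hat x" for x :: real
    by (auto simp: hat_def indicator_def)
  ultimately show ?thesis by simp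
qed

lemma hat_neg: "(\<integral>\<^sup>+ x. ennreal (hat x) * indicator {..0} x \<partial>lborel) = 1/2"
proof -
  have "(\<integral>\<^sup>+ x. ennreal (indicator {-1..0} x * (1 - \<bar>x\<bar>)) \<partial>lborel) = ennreal (1/2)"
    by (intro nn_integral_has_integral_lebesgue hat_has_int1) auto
  moreover have "ennreal (indicator {-1..0} x * (1 - \<bar>x\<bar>)) = ennreal (hat x) * indicator {..0} x" for x :: real
    by (auto simp: hat_def indicator_def ennreal_neg)
  ultimately show ?thesis by (simp add: ennreal_half inv2)
qed

lemma refl_int:
  fixes f :: "real \<Rightarrow> ennreal"
  assumes [measurable]: "f \<in> borel_measurable borel"
  shows "(\<integral>\<^sup>+ x. f (-x) \<partial>lborel) = (\<integral>\<^sup>+ x. f x \<partial>lborel)"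
  using nn_integral_real_affine[OF assms, of "-1" 0] by simp

lemma bp_int_le: "(\<integral>\<^sup>+ x. ennreal (bp x) \<partial>lborel) \<le> 1"
proof -
  have "(\<integral>\<^sup>+ x. ennreal (bp x) \<partial>lborel) \<le> (\<integral>\<^sup>+ x. indicator {0..1::real} x \<partial>lborel)"
    by (rule nn_integral_mono) (auto simp: indicator_def bp_def ennreal_neg)
  then show ?thesis by simp
qed

lemma bp_int_ge: "ennreal (1/8) \<le> (\<integral>\<^sup>+ x. ennreal (bp x) \<partial>lborel)"
proof -
  have "(\<integral>\<^sup>+ x. ennreal (1/4) * indicator {1/4..3/4::real} x \<partial>lborel) \<le> (\<integral>\<^sup>+ x. ennreal (bp x) \<partial>lborel)"
    by (rule nn_integral_mono) (auto simp: indicator_def bp_def abs_if intro!: ennreal_leI)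
  moreover have "(\<integral>\<^sup>+ x. ennreal (1/4) * indicator {1/4..3/4::real} x \<partial>lborel) = ennreal (1/8)"
  proof -
    have "emeasure lborel {1/4..3/4::real} = ennreal (1/2)"
      using emeasure_lborel_Icc[of "1/4::real" "3/4"] by simp
    then show ?thesis by (simp only: nn_integral_cmult_indicator sets_lborel atLeastAtMost_borel ennreal_mult[symmetric]) simp
  qed
  ultimately show ?thesis by simp
qed

lemma ennreal_cancel: "(X::ennreal) + Y = Z + Y \<Longrightarrow> Y \<noteq> \<top> \<Longrightarrow> X = Z"
  by (metis ennreal_add_diff_cancel_right)

lemma ennreal_cancel_le: "(X::ennreal) + Y \<le> Z + Y \<Longrightarrow> Y \<noteq> \<top> \<Longrightarrow> X \<le> Z"
proof -
  assume a: "X + Y \<le> Z + Y" "Y \<noteq> \<top>"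
  then have "Y + X \<le> Y + Z" by (simp add: add.commute)
  then show ?thesis using a(2) ennreal_add_left_cancel_le by simp
qed

lemma Me_total:
  assumes e: "0 \<le> e" "e \<le> 1"
  shows "(\<integral>\<^sup>+ x. ennreal (hat x + e * bump x) \<partial>lborel) = 1"
proof -
  define B where "B = (\<integral>\<^sup>+ x. ennreal (bp x) \<partial>lborel)"
  have "B \<noteq> \<top>" using bp_int_le by (auto simp: B_def top_unique)
  then have Bfin: "ennreal e * B \<noteq> \<top>" by (simp add: ennreal_mult_eq_top_iff)
  have "(\<integral>\<^sup>+ x. ennreal (hat x + e * bump x) + ennreal (e * bp (-x)) \<partial>lborel)
      = (\<integral>\<^sup>+ x. ennreal (hat x) + ennreal e * ennreal (bp x) \<partial>lborel)"
  proof (rule nn_integral_cong)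
    fix x :: real
    have "ennreal (hat x + e * bump x) + ennreal (e * bp (-x)) = ennreal (hat x + e * bump x + e * bp (-x))"
      using fe_nonneg[OF e, of x] e bp_nonneg[of "-x"] by (simp add: ennreal_plus)
    also have "\<dots> = ennreal (hat x + e * bp x)" by (simp add: bump_def algebra_simps)
    also have "\<dots> = ennreal (hat x) + ennreal e * ennreal (bp x)"
      using hat_nonneg[of x] e bp_nonneg[of x] by (simp add: ennreal_plus ennreal_mult)
    finally show "ennreal (hat x + e * bump x) + ennreal (e * bp (-x)) = ennreal (hat x) + ennreal e * ennreal (bp x)" .
  qed
  moreover have "(\<integral>\<^sup>+ x. ennreal (hat x + e * bump x) + ennreal (e * bp (-x)) \<partial>lborel)
      = (\<integral>\<^sup>+ x. ennreal (hat x + e * bump x) \<partial>lborel) + ennreal e * B"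
  proof -
    have "(\<integral>\<^sup>+ x. ennreal (e * bp (-x)) \<partial>lborel) = ennreal e * (\<integral>\<^sup>+ x. ennreal (bp (-x)) \<partial>lborel)"
      using e by (simp add: ennreal_mult bp_nonneg nn_integral_cmult)
    also have "(\<integral>\<^sup>+ x. ennreal (bp (-x)) \<partial>lborel) = B"
      unfolding B_def by (rule refl_int) simp
    finally show ?thesis by (subst nn_integral_add) auto
  qed
  moreover have "(\<integral>\<^sup>+ x. ennreal (hat x) + ennreal e * ennreal (bp x) \<partial>lborel) = 1 + ennreal e * B"
    by (subst nn_integral_add) (auto simp: hat_int nn_integral_cmult B_def)
  ultimately show ?thesis using ennreal_cancel Bfin by metis
qed

lemma Me_sets[simp]: "sets (Me e) = sets borel" by (simp add: Me_def)
lemma Me_space[simp]: "space (Me e) = UNIV" by (simp add: Me_def)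

lemma Me_emeasure: "A \<in> sets borel \<Longrightarrow> emeasure (Me e) A = (\<integral>\<^sup>+ x. ennreal (hat x + e * bump x) * indicator A x \<partial>lborel)"
  unfolding Me_def by (subst emeasure_density) auto

lemma Me_int: "h \<in> borel_measurable borel \<Longrightarrow> (\<integral>\<^sup>+ x. h x \<partial>Me e) = (\<integral>\<^sup>+ x. ennreal (hat x + e * bump x) * h x \<partial>lborel)"
  unfolding Me_def by (subst nn_integral_density) auto

lemma Me_prob: assumes "0 \<le> e" "e \<le> 1" shows "prob_space (Me e)"
proof (rule prob_spaceI)
  show "emeasure (Me e) (space (Me e)) = 1"
    using Me_emeasure[of UNIV e] Me_total[OF assms] by simp
qed

lemma Me_PLip: assumes "0 \<le> e" "e \<le> 1" shows "Me e \<in> P_Lip"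
  unfolding P_Lip_def
proof (intro CollectI conjI exI allI)
  show "prob_space (Me e)" by (rule Me_prob[OF assms])
  show "0 \<le> hat x + e * bump x" for x by (rule fe_nonneg[OF assms])
  have "1-lipschitz_on UNIV hat"
    by (rule lipschitz_onI) (auto simp: hat_def dist_real_def max_def abs_if)
  from lipschitz_on_add[OF this lipschitz_on_cmult_real_nonneg[OF bump_lip assms(1)]]
  show "(1 + e * 2)-lipschitz_on UNIV (\<lambda>x. hat x + e * bump x)" .
  show "Me e = density lborel (\<lambda>x. ennreal (hat x + e * bump x))" by (simp add: Me_def)
qed

lemma Me_single: "emeasure (Me e) {y} = 0"
proof -
  have "emeasure (Me e) {y} = (\<integral>\<^sup>+ x. ennreal (hat x + e * bump x) * indicator {y} x \<partial>lborel)"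
    by (rule Me_emeasure) simp
  also have "\<dots> = (\<integral>\<^sup>+ (x::real). 0 \<partial>lborel)"
    by (rule nn_integral_cong_AE) (use AE_lborel_singleton[of y] in \<open>auto simp: indicator_def\<close>)
  finally show ?thesis by simp
qed

lemma Me_bnd: "AE x in Me e. \<bar>x\<bar> \<le> 1"
  unfolding Me_def
proof (subst AE_density)
  show "AE x in lborel. 0 < ennreal (hat x + e * bump x) \<longrightarrow> \<bar>x\<bar> \<le> 1"
  proof (rule AE_I2, rule impI, rule ccontr)
    fix x :: real assume "0 < ennreal (hat x + e * bump x)" "\<not> \<bar>x\<bar> \<le> 1"
    then show False using hat_zero[of x] bump_zero[of x] by simp
  qed
qed simp

lemma M0_half: "emeasure (Me 0) {..0} = 1/2"
  using Me_emeasure[of "{..0}" 0] hat_neg by simp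

lemma Me_upper: "emeasure (Me e) {1<..} = 0"
proof -
  have "emeasure (Me e) {1<..} = (\<integral>\<^sup>+ x. ennreal (hat x + e * bump x) * indicator {1<..} x \<partial>lborel)"
    by (rule Me_emeasure) simp
  also have "\<dots> = (\<integral>\<^sup>+ (x::real). 0 \<partial>lborel)"
    by (rule nn_integral_cong) (auto simp: indicator_def hat_zero bump_zero)
  finally show ?thesis by simp
qed

lemma M1_low:
  assumes e: "0 < e" "e \<le> 1"
  shows "measure (Me e) {..e/32} < 1/2"
proof -
  define b where "b = e/32"
  define B where "B = (\<integral>\<^sup>+ x. ennreal (bp x) \<partial>lborel)"
  have b: "0 < b" "b \<le> 1/32" using e by (auto simp: b_def)
  have "(\<integral>\<^sup>+ x. ennreal (hat x + e * bump x) * indicator {..b} x + ennreal (e * bp (-x)) \<partial>lborel)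
     \<le> (\<integral>\<^sup>+ x. ennreal (hat x) * indicator {..0} x + ennreal 2 * indicator {0<..b} x \<partial>lborel)"
  proof (rule nn_integral_mono)
    fix x :: real
    show "ennreal (hat x + e * bump x) * indicator {..b} x + ennreal (e * bp (-x))
       \<le> ennreal (hat x) * indicator {..0} x + ennreal 2 * indicator {0<..b} x"
    proof (cases "x \<le> 0")
      case True
      then have "bp x = 0" by (simp add: bp_zero)
      then have eq: "hat x + e * bump x + e * bp (-x) = hat x" by (simp add: bump_def)
      have "ennreal (hat x + e * bump x) + ennreal (e * bp (-x)) = ennreal (hat x + e * bump x + e * bp (-x))"
        using fe_nonneg[of e x] e bp_nonneg[of "-x"] by (simp add: ennreal_plus)
      then show ?thesis using True b by (simp add: indicator_def eq)
    next
      case False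
      then have z: "bp (-x) = 0" by (simp add: bp_zero)
      show ?thesis
      proof (cases "x \<le> b")
        case True
        have "e * bp x \<le> 1" using e bp_le[of x] bp_nonneg[of x] by (intro mult_le_one) auto
        then have "hat x + e * bump x \<le> 2"
          using hat_le1[of x] z by (simp add: bump_def)
        then have "ennreal (hat x + e * bump x) \<le> ennreal 2" by (rule ennreal_leI)
        then show ?thesis using True False z by (simp add: indicator_def)
      next
        case False2: False
        then show ?thesis using False z by (simp add: indicator_def)
      qed
    qed
  qed
  moreover have "(\<integral>\<^sup>+ x. ennreal (hat x + e * bump x) * indicator {..b} x + ennreal (e * bp (-x)) \<partial>lborel)
     = emeasure (Me e) {..b} + ennreal e * B"
  proof -
    have "(\<integral>\<^sup>+ x. ennreal (e * bp (-x)) \<partial>lborel) = ennreal e * (\<integral>\<^sup>+ x. ennreal (bp (-x)) \<partial>lborel)"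
      using e by (simp add: ennreal_mult bp_nonneg nn_integral_cmult)
    also have "(\<integral>\<^sup>+ x. ennreal (bp (-x)) \<partial>lborel) = B"
      unfolding B_def by (rule refl_int) simp
    finally show ?thesis by (subst nn_integral_add) (auto simp: Me_emeasure)
  qed
  moreover have "(\<integral>\<^sup>+ x. ennreal (hat x) * indicator {..0} x + ennreal 2 * indicator {0<..b} x \<partial>lborel)
     = 1/2 + ennreal (2 * b)"
    using b by (subst nn_integral_add) (auto simp: hat_neg nn_integral_cmult_indicator ennreal_mult)
  ultimately have le: "emeasure (Me e) {..b} + ennreal e * B \<le> 1/2 + ennreal (2*b)" by simp
  have "ennreal e * ennreal (1/8) \<le> ennreal e * B" using bp_int_ge unfolding B_def by (rule mult_left_mono) simp
  then have "ennreal (e/8) \<le> ennreal e * B" using e by (simp add: ennreal_mult[symmetric])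
  then have le2: "emeasure (Me e) {..b} + ennreal (e/8) \<le> 1/2 + ennreal (2*b)"
    using le by (meson add_left_mono order_trans)
  interpret prob_space "Me e" using Me_prob e by simp
  have r1: "emeasure (Me e) {..b} + ennreal (e/8) = ennreal (measure (Me e) {..b} + e/8)"
    using e by (simp add: emeasure_eq_measure ennreal_plus)
  have r2: "(1/2::ennreal) + ennreal (2*b) = ennreal (1/2 + 2*b)"
    using b by (simp only: ennreal_half[symmetric]) (rule ennreal_plus[symmetric], auto)
  from le2 have "ennreal (measure (Me e) {..b} + e/8) \<le> ennreal (1/2 + 2*b)"
    by (simp only: r1 r2)
  then have "measure (Me e) {..b} + e/8 \<le> 1/2 + 2*b"
    using b by (subst (asm) ennreal_le_iff) auto
  then show ?thesis using e by (simp add: b_def)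
qed

definition ell :: "real \<Rightarrow> real \<Rightarrow> real" where
  "ell e x = 1 + e * (bump x / hat x)"

lemma ell_meas[measurable]: "ell e \<in> borel_measurable borel"
  unfolding ell_def[abs_def] by measurable

lemma ell_Me: "ell e \<in> borel_measurable (Me e')"
  using ell_meas by (simp only: measurable_cong_sets[OF Me_sets refl])

lemma ratio_le: "\<bar>bump x / hat x\<bar> \<le> 1"
proof (cases "hat x = 0")
  case False
  then have "0 < hat x" using hat_nonneg[of x] by simp
  then have "\<bar>bump x\<bar> / hat x \<le> 1" using bump_le[of x] by (simp only: divide_le_eq_1_pos)
  moreover have "\<bar>bump x / hat x\<bar> = \<bar>bump x\<bar> / hat x"
    using \<open>0 < hat x\<close> by (simp only: abs_divide abs_of_pos)
  ultimately show ?thesis by (simp only:)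
qed simp

lemma ell_bounds: assumes "0 \<le> e" shows "1 - e \<le> ell e x" "ell e x \<le> 1 + e" "\<bar>ell e x - 1\<bar> \<le> e"
proof -
  have "e * \<bar>bump x / hat x\<bar> \<le> e * 1" using ratio_le[of x] assms by (rule mult_left_mono)
  then have h: "\<bar>e * (bump x / hat x)\<bar> \<le> e" using assms by (simp add: abs_mult)
  then show "1 - e \<le> ell e x" unfolding ell_def using abs_le_D2[OF h] by linarith
  from h show "ell e x \<le> 1 + e" unfolding ell_def using abs_le_D1[OF h] by linarith
  from h show "\<bar>ell e x - 1\<bar> \<le> e" unfolding ell_def by simp
qed

lemma ell_nonneg: "0 \<le> e \<Longrightarrow> e \<le> 1 \<Longrightarrow> 0 \<le> ell e x"
  using ell_bounds(1)[of e x] by simp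

lemma ell_mult: "hat x * ell e x = hat x + e * bump x"
proof (cases "hat x = 0")
  case True then show ?thesis using bump_le[of x] by (simp add: ell_def)
qed (simp add: ell_def field_simps)

lemma Me_ell:
  assumes e: "0 \<le> e" "e \<le> 1" and h[measurable]: "h \<in> borel_measurable borel"
  shows "(\<integral>\<^sup>+ x. h x \<partial>Me e) = (\<integral>\<^sup>+ x. ennreal (ell e x) * h x \<partial>Me 0)"
proof -
  have "(\<integral>\<^sup>+ x. ennreal (ell e x) * h x \<partial>Me 0) = (\<integral>\<^sup>+ x. ennreal (hat x + 0 * bump x) * (ennreal (ell e x) * h x) \<partial>lborel)"
    by (rule Me_int) simp
  also have "\<dots> = (\<integral>\<^sup>+ x. ennreal (hat x + e * bump x) * h x \<partial>lborel)"
  proof (rule nn_integral_cong)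
    fix x :: real
    have "ennreal (hat x) * ennreal (ell e x) = ennreal (hat x + e * bump x)"
      using hat_nonneg[of x] ell_nonneg[OF e, of x] by (simp add: ennreal_mult[symmetric] ell_mult)
    then show "ennreal (hat x + 0 * bump x) * (ennreal (ell e x) * h x) = ennreal (hat x + e * bump x) * h x"
      by (simp add: mult.assoc[symmetric])
  qed
  also have "\<dots> = (\<integral>\<^sup>+ x. h x \<partial>Me e)" by (rule Me_int[symmetric]) simp
  finally show ?thesis by (rule sym)
qed

lemma Me_meas: "f \<in> borel_measurable borel \<Longrightarrow> f \<in> borel_measurable (Me e)"
  by (simp only: measurable_cong_sets[OF Me_sets refl])

lemma Me_psf: "0 \<le> e \<Longrightarrow> e \<le> 1 \<Longrightarrow> product_sigma_finite (\<lambda>_. Me e)"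
  unfolding product_sigma_finite_def using Me_prob prob_space_imp_sigma_finite by blast

lemma ind_PiE:
  assumes "X \<in> space (PiM I (\<lambda>_. Me e'))" "finite I"
  shows "indicator (PiE I A) X = (\<Prod>i\<in>I. indicator (A i) (X i) :: ennreal)"
proof (cases "X \<in> PiE I A")
  case True then show ?thesis by (auto simp: indicator_def PiE_iff)
next
  case False
  have "X \<in> extensional I" using assms by (auto simp: space_PiM PiE_iff)
  with False obtain i where "i \<in> I" "X i \<notin> A i" by (auto simp: PiE_iff)
  then show ?thesis using False assms by (auto simp: indicator_def intro!: prod_zero)
qed

lemma PiM_Me:
  fixes n :: nat
  assumes e: "0 \<le> e" "e \<le> 1"
  shows "PiM {..<n} (\<lambda>_. Me e) = density (PiM {..<n} (\<lambda>_. Me 0)) (\<lambda>X. \<Prod>i<n. ennreal (ell e (X i)))"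
proof -
  interpret E: product_sigma_finite "\<lambda>_. Me e" by (rule Me_psf[OF e])
  interpret Z: product_sigma_finite "\<lambda>_. Me 0" by (rule Me_psf) auto
  have Lm: "(\<lambda>X. \<Prod>i<n. ennreal (ell e (X i))) \<in> borel_measurable (PiM {..<n} (\<lambda>_. Me 0))"
  proof (rule borel_measurable_prod_ennreal)
    fix i assume "i \<in> {..<n}"
    then have "(\<lambda>X. X i) \<in> measurable (PiM {..<n} (\<lambda>_. Me 0)) (Me 0)" by (rule measurable_component_singleton)
    from measurable_compose[OF this measurable_compose[OF ell_Me[of e 0] measurable_ennreal]]
    show "(\<lambda>X. ennreal (ell e (X i))) \<in> borel_measurable (PiM {..<n} (\<lambda>_. Me 0))" .
  qed
  have "density (PiM {..<n} (\<lambda>_. Me 0)) (\<lambda>X. \<Prod>i<n. ennreal (ell e (X i))) = PiM {..<n} (\<lambda>_. Me e)"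
  proof (rule E.PiM_eqI)
    show "sets (density (PiM {..<n} (\<lambda>_. Me 0)) (\<lambda>X. \<Prod>i<n. ennreal (ell e (X i)))) = sets (PiM {..<n} (\<lambda>_. Me e))"
      by (simp only: sets_density) (rule sets_PiM_cong, auto)
  next
    fix A assume A: "\<And>i. i \<in> {..<n} \<Longrightarrow> A i \<in> sets (Me e)"
    have PA: "PiE {..<n} A \<in> sets (PiM {..<n} (\<lambda>_. Me 0))"
      using A by (intro sets_PiM_I_finite) auto
    have "emeasure (density (PiM {..<n} (\<lambda>_. Me 0)) (\<lambda>X. \<Prod>i<n. ennreal (ell e (X i)))) (PiE {..<n} A)
        = (\<integral>\<^sup>+ X. (\<Prod>i<n. ennreal (ell e (X i))) * indicator (PiE {..<n} A) X \<partial>PiM {..<n} (\<lambda>_. Me 0))"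
      using Lm PA by (simp add: emeasure_density)
    also have "\<dots> = (\<integral>\<^sup>+ X. (\<Prod>i<n. ennreal (ell e (X i)) * indicator (A i) (X i)) \<partial>PiM {..<n} (\<lambda>_. Me 0))"
      by (rule nn_integral_cong) (simp add: ind_PiE prod.distrib)
    also have "\<dots> = (\<Prod>i<n. (\<integral>\<^sup>+ x. ennreal (ell e x) * indicator (A i) x \<partial>Me 0))"
    proof (intro Z.product_nn_integral_prod Me_meas)
      fix i assume "i \<in> {..<n}"
      then have [measurable]: "A i \<in> sets borel" using A by simp
      show "(\<lambda>x. ennreal (ell e x) * indicator (A i) x) \<in> borel_measurable borel" by measurable
    qed simp
    also have "\<dots> = (\<Prod>i<n. emeasure (Me e) (A i))"
    proof (rule prod.cong)
      fix i assume "i \<in> {..<n}"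
      then have Ai: "A i \<in> sets borel" using A by simp
      then have "emeasure (Me e) (A i) = (\<integral>\<^sup>+ x. indicator (A i) x \<partial>Me e)" by simp
      also have "\<dots> = (\<integral>\<^sup>+ x. ennreal (ell e x) * indicator (A i) x \<partial>Me 0)"
        using Ai by (intro Me_ell e) simp
      finally show "(\<integral>\<^sup>+ x. ennreal (ell e x) * indicator (A i) x \<partial>Me 0) = emeasure (Me e) (A i)" ..
    qed simp
    finally show "emeasure (density (PiM {..<n} (\<lambda>_. Me 0)) (\<lambda>X. \<Prod>i<n. ennreal (ell e (X i)))) (PiE {..<n} A) = (\<Prod>i<n. emeasure (Me e) (A i))" .
  qed simp
  then show ?thesis by (rule sym)
qed

lemma Me_space1: "0 \<le> e \<Longrightarrow> e \<le> 1 \<Longrightarrow> (\<integral>\<^sup>+ x. 1 \<partial>Me e) = 1"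
  using prob_space.emeasure_space_1[OF Me_prob] by simp

lemma int_ell: assumes e: "0 \<le> e" "e \<le> 1"
  shows "(\<integral>\<^sup>+ x. ennreal (ell e x) \<partial>Me 0) = 1"
  using Me_ell[OF e, of "\<lambda>_. 1"] Me_space1[OF e] by simp

lemma int_ell2: assumes e: "0 \<le> e" "e \<le> 1"
  shows "(\<integral>\<^sup>+ x. ennreal ((ell e x)\<^sup>2) \<partial>Me 0) \<le> ennreal (1 + e\<^sup>2)"
proof -
  have ineq: "(\<integral>\<^sup>+ x. ennreal ((ell e x)\<^sup>2) + 1 \<partial>Me 0) \<le> (\<integral>\<^sup>+ x. 2 * ennreal (ell e x) + ennreal (e\<^sup>2) \<partial>Me 0)"
  proof (rule nn_integral_mono)
    fix x
    have b: "\<bar>ell e x - 1\<bar> \<le> e" by (rule ell_bounds(3)[OF e(1)])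
    have "(ell e x - 1)\<^sup>2 \<le> e\<^sup>2" using b e(1)
      by (metis abs_le_square_iff abs_of_nonneg)
    then have "(ell e x)\<^sup>2 + 1 \<le> 2 * ell e x + e\<^sup>2" by (simp add: power2_eq_square algebra_simps)
    then have "ennreal ((ell e x)\<^sup>2 + 1) \<le> ennreal (2 * ell e x + e\<^sup>2)" by (rule ennreal_leI)
    then show "ennreal ((ell e x)\<^sup>2) + 1 \<le> 2 * ennreal (ell e x) + ennreal (e\<^sup>2)"
      using ell_nonneg[OF e, of x] by (simp add: ennreal_plus ennreal_mult)
  qed
  have m: "(\<lambda>x. ennreal (ell e x)) \<in> borel_measurable (Me 0)" by (intro Me_meas) simp
  have U: "emeasure (Me 0) UNIV = 1" using Me_space1[of 0] by simp
  have "(\<integral>\<^sup>+ x. 2 * ennreal (ell e x) \<partial>Me 0) = 2"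
    using nn_integral_cmult[OF m, of 2] int_ell[OF e] by simp
  then have "(\<integral>\<^sup>+ x. 2 * ennreal (ell e x) + ennreal (e\<^sup>2) \<partial>Me 0) = 2 * 1 + ennreal (e\<^sup>2)"
    using m by (subst nn_integral_add) (auto simp: U)
  also have "2 * 1 + ennreal (e\<^sup>2) = ennreal (1 + e\<^sup>2) + 1"
  proof -
    have "ennreal (1 + e\<^sup>2) = 1 + ennreal (e\<^sup>2)" by (simp add: ennreal_plus)
    then show ?thesis by (metis add.commute add.left_commute one_add_one mult_1_right)
  qed
  finally have "(\<integral>\<^sup>+ x. ennreal ((ell e x)\<^sup>2) + 1 \<partial>Me 0) \<le> ennreal (1 + e\<^sup>2) + 1" using ineq by simp
  moreover have "(\<integral>\<^sup>+ x. ennreal ((ell e x)\<^sup>2) + 1 \<partial>Me 0) = (\<integral>\<^sup>+ x. ennreal ((ell e x)\<^sup>2) \<partial>Me 0) + 1"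
    by (subst nn_integral_add) (auto intro!: Me_meas simp: U)
  ultimately have "(\<integral>\<^sup>+ x. ennreal ((ell e x)\<^sup>2) \<partial>Me 0) + 1 \<le> ennreal (1 + e\<^sup>2) + 1" by simp
  then show ?thesis by (rule ennreal_cancel_le) simp
qed


lemma intL:
  fixes n :: nat assumes e: "0 \<le> e" "e \<le> 1"
  shows "(\<integral>\<^sup>+ X. (\<Prod>i<n. ennreal (ell e (X i))) \<partial>PiM {..<n} (\<lambda>_. Me 0)) = 1"
proof -
  interpret Z: product_sigma_finite "\<lambda>_. Me 0" by (rule Me_psf) auto
  have "(\<integral>\<^sup>+ X. (\<Prod>i<n. ennreal (ell e (X i))) \<partial>PiM {..<n} (\<lambda>_. Me 0)) = (\<Prod>i<n. (\<integral>\<^sup>+ x. ennreal (ell e x) \<partial>Me 0))"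
    by (rule Z.product_nn_integral_prod) (auto intro!: Me_meas)
  also have "\<dots> = 1" using int_ell[OF e] by simp
  finally show ?thesis .
qed

lemma intL2:
  fixes n :: nat assumes e: "0 \<le> e" "e \<le> 1"
  shows "(\<integral>\<^sup>+ X. (\<Prod>i<n. ennreal (ell e (X i)))\<^sup>2 \<partial>PiM {..<n} (\<lambda>_. Me 0)) \<le> ennreal ((1 + e\<^sup>2) ^ n)"
proof -
  interpret Z: product_sigma_finite "\<lambda>_. Me 0" by (rule Me_psf) auto
  have "(\<integral>\<^sup>+ X. (\<Prod>i<n. ennreal (ell e (X i)))\<^sup>2 \<partial>PiM {..<n} (\<lambda>_. Me 0))
      = (\<integral>\<^sup>+ X. (\<Prod>i<n. ennreal ((ell e (X i))\<^sup>2)) \<partial>PiM {..<n} (\<lambda>_. Me 0))"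
    by (rule nn_integral_cong) (simp add: prod_power_distrib ennreal_power ell_nonneg[OF e])
  also have "\<dots> = (\<Prod>i<n. (\<integral>\<^sup>+ x. ennreal ((ell e x)\<^sup>2) \<partial>Me 0))"
    by (rule Z.product_nn_integral_prod) (auto intro!: Me_meas)
  also have "\<dots> = (\<integral>\<^sup>+ x. ennreal ((ell e x)\<^sup>2) \<partial>Me 0) ^ n" by simp
  also have "\<dots> \<le> ennreal (1 + e\<^sup>2) ^ n" by (rule power_mono[OF int_ell2[OF e]]) simp
  also have "\<dots> = ennreal ((1 + e\<^sup>2) ^ n)" by (rule ennreal_power) simp
  finally show ?thesis .
qed

lemma min_ineq: "(z::ennreal) \<le> min 1 z + ennreal (1/4) * z\<^sup>2"
proof (cases z rule: ennreal_cases)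
  case (real r)
  have "r \<le> min 1 r + 1/4 * r\<^sup>2"
  proof (cases "r \<le> 1")
    case True then show ?thesis using real by simp
  next
    case False
    have "0 \<le> (r/2 - 1)\<^sup>2" by simp
    then show ?thesis using False by (simp add: power2_eq_square field_simps)
  qed
  moreover have "min 1 z = ennreal (min 1 r)" using real by (auto simp: min_def)
  ultimately show ?thesis using real
    by (simp add: ennreal_power ennreal_mult[symmetric] ennreal_plus[symmetric] ennreal_leI del: ennreal_plus)
next
  case top then show ?thesis by (simp add: ennreal_mult_top)
qed

lemma intmin:
  assumes Lm: "L \<in> borel_measurable M" and i1: "(\<integral>\<^sup>+ x. L x \<partial>M) = 1"
    and i2: "(\<integral>\<^sup>+ x. (L x)\<^sup>2 \<partial>M) \<le> 3"
  shows "ennreal (1/4) \<le> (\<integral>\<^sup>+ x. min 1 (L x) \<partial>M)"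
proof -
  have "(\<integral>\<^sup>+ x. L x \<partial>M) \<le> (\<integral>\<^sup>+ x. min 1 (L x) + ennreal (1/4) * (L x)\<^sup>2 \<partial>M)"
    by (rule nn_integral_mono) (rule min_ineq)
  then have "1 \<le> (\<integral>\<^sup>+ x. min 1 (L x) + ennreal (1/4) * (L x)\<^sup>2 \<partial>M)" using i1 by simp
  also have "\<dots> = (\<integral>\<^sup>+ x. min 1 (L x) \<partial>M) + ennreal (1/4) * (\<integral>\<^sup>+ x. (L x)\<^sup>2 \<partial>M)"
    using Lm by (simp add: nn_integral_add nn_integral_cmult)
  also have "\<dots> \<le> (\<integral>\<^sup>+ x. min 1 (L x) \<partial>M) + ennreal (1/4) * 3"
    using i2 by (intro add_left_mono mult_left_mono) auto
  also have "ennreal (1/4) * 3 = ennreal (3/4)"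
    using ennreal_mult[of "1/4" 3] by (simp add: ennreal_numeral)
  finally have "ennreal (1/4) + ennreal (3/4) \<le> (\<integral>\<^sup>+ x. min 1 (L x) \<partial>M) + ennreal (3/4)"
    by (simp add: ennreal_plus[symmetric] del: ennreal_plus)
  then show ?thesis by (rule ennreal_cancel_le) simp
qed

lemma median1:
  assumes e: "0 < e" "e \<le> 1"
  shows "\<exists>m. e/32 < m \<and> emeasure (Me e) {..m} = 1/2"
proof -
  interpret real_distribution "Me e"
    by (simp add: real_distribution_def real_distribution_axioms_def Me_prob e less_imp_le)
  have low: "cdf (Me e) (e/32) < 1/2" using M1_low[OF e] by (simp add: cdf_def)
  have "measure (Me e) {1<..} = 0" using Me_upper[of e] by (simp add: measure_def)
  moreover have "measure (Me e) {1<..} = 1 - measure (Me e) {..1}"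
    using prob_compl[of "{..1}"] by (simp add: Compl_eq_Diff_UNIV[symmetric] Compl_atMost)
  ultimately have up: "cdf (Me e) 1 = 1" by (simp add: cdf_def)
  have cont: "continuous_on {e/32..1} (cdf (Me e))"
  proof (intro continuous_at_imp_continuous_on ballI)
    fix x show "isCont (cdf (Me e)) x"
      using isCont_cdf[of x] Me_single[of e x] by (simp add: measure_def)
  qed
  obtain m where m: "e/32 \<le> m" "m \<le> 1" "cdf (Me e) m = 1/2"
    using IVT'[of "cdf (Me e)" "e/32" "1/2" 1] low up cont e by force
  then have gt: "e/32 < m" using low by (cases "e/32 = m") auto
  have mm: "measure (Me e) {..m} = 1/2" using m(3) by (simp add: cdf_def)
  have "emeasure (Me e) {..m} = 1/2" using mm ennreal_half by (simp only: emeasure_eq_measure)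
  then show ?thesis using gt by blast
qed

lemma ot0: "is_ot_map (Me 0) nu_half T \<Longrightarrow> AE x in Me 0. T x = (if 0 < x then 1 else 0)"
  by (rule ot_threshold[where B=1]) (auto simp: Me_prob Me_single M0_half Me_bnd)

lemma ot1: "0 \<le> e \<Longrightarrow> e \<le> 1 \<Longrightarrow> emeasure (Me e) {..m} = 1/2 \<Longrightarrow> is_ot_map (Me e) nu_half T \<Longrightarrow>
    AE x in Me e. T x = (if m < x then 1 else 0)"
  by (rule ot_threshold[where B=1]) (auto simp: Me_prob Me_single Me_bnd)

lemma sets_prod_Me: "sets (PiM {..<n} (\<lambda>_. Me e) \<Otimes>\<^sub>M Me e') = sets (PiM {..<n} (\<lambda>_. borel) \<Otimes>\<^sub>M borel)"
  by (intro sets_pair_measure_cong sets_PiM_cong) auto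

lemma space_PiM_Me: "space (PiM {..<n} (\<lambda>_. Me e)) = space (PiM {..<n} (\<lambda>_. (borel::real measure)))"
  by (simp add: space_PiM)

lemma phi_meas:
  assumes est: "estimator n Tn" and R[measurable]: "R \<in> sets borel"
  shows "(\<lambda>X. \<integral>\<^sup>+ x. indicator R x * ennreal (\<bar>Tn X x - a\<bar> powr p) \<partial>Me 0) \<in> borel_measurable (PiM {..<n} (\<lambda>_. Me 0))"
proof -
  interpret sigma_finite_measure "Me 0" using Me_prob[of 0] prob_space_imp_sigma_finite by simp
  have g[measurable]: "(\<lambda>w. Tn (fst w) (snd w)) \<in> borel_measurable (PiM {..<n} (\<lambda>_. borel) \<Otimes>\<^sub>M borel)"
    using est unfolding estimator_def by (simp add: case_prod_beta)
  show ?thesis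
  proof (rule borel_measurable_nn_integral)
    have "(\<lambda>w. indicator R (snd w) * ennreal (\<bar>Tn (fst w) (snd w) - a\<bar> powr p)) \<in> borel_measurable (PiM {..<n} (\<lambda>_. borel) \<Otimes>\<^sub>M (borel::real measure))"
      by measurable
    then show "case_prod (\<lambda>X x. indicator R x * ennreal (\<bar>Tn X x - a\<bar> powr p)) \<in> borel_measurable (PiM {..<n} (\<lambda>_. Me 0) \<Otimes>\<^sub>M Me 0)"
      by (simp only: measurable_cong_sets[OF sets_prod_Me refl] split_beta')
  qed
qed

lemma sec_meas:
  assumes est: "estimator n Tn" and X: "X \<in> space (PiM {..<n} (\<lambda>_. Me e))"
  shows "Tn X \<in> borel_measurable borel"
proof -
  have "X \<in> space (PiM {..<n} (\<lambda>_. (borel::real measure)))" using X space_PiM_Me by metis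
  from measurable_Pair2[OF est[unfolded estimator_def] this] show ?thesis by simp
qed

lemma Lmeas:
  fixes n :: nat
  shows "(\<lambda>X. \<Prod>i<n. ennreal (ell e (X i))) \<in> borel_measurable (PiM {..<n} (\<lambda>_. Me 0))"
proof (rule borel_measurable_prod_ennreal)
  fix i assume "i \<in> {..<n}"
  then have "(\<lambda>X. X i) \<in> measurable (PiM {..<n} (\<lambda>_. Me 0)) (Me 0)" by (rule measurable_component_singleton)
  from measurable_compose[OF this measurable_compose[OF ell_Me[of e 0] measurable_ennreal]]
  show "(\<lambda>X. ennreal (ell e (X i))) \<in> borel_measurable (PiM {..<n} (\<lambda>_. Me 0))" .
qed

lemma exp_bound: "1 \<le> n \<Longrightarrow> (1 + 1 / real n) ^ n \<le> 3"
proof -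
  assume n: "1 \<le> n"
  have "(1 + 1 / real n) ^ n \<le> exp (1 / real n) ^ n"
    by (rule power_mono) (auto simp: exp_ge_add_one_self add_nonneg_nonneg)
  also have "\<dots> = exp (real n * (1 / real n))" by (rule exp_of_nat_mult[symmetric])
  also have "\<dots> = exp 1" using n by simp
  also have "\<dots> \<le> 3" by (rule exp_le)
  finally show ?thesis .
qed

lemma half_bound: "ennreal c \<le> S + S \<Longrightarrow> 0 \<le> c \<Longrightarrow> ennreal (c/2) \<le> S"
proof (cases S rule: ennreal_cases)
  case (real s)
  assume a: "ennreal c \<le> S + S" "0 \<le> c"
  have "ennreal s + ennreal s = ennreal (s + s)" by (rule ennreal_plus[symmetric]) (use real in auto)
  then have "ennreal c \<le> ennreal (s + s)" using real a by simp
  then have "c \<le> s + s" using real by (subst (asm) ennreal_le_iff) auto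
  then have "ennreal (c/2) \<le> ennreal s" by (intro ennreal_leI) simp
  then show ?thesis using real by simp
qed simp

lemma powr_pair: fixes t p :: real assumes "0 \<le> p" shows "(1/2) powr p \<le> \<bar>t - 1\<bar> powr p + \<bar>t\<bar> powr p"
proof (cases "1/2 \<le> \<bar>t\<bar>")
  case True
  then have "(1/2) powr p \<le> \<bar>t\<bar> powr p" using assms by (intro powr_mono2) auto
  then show ?thesis by (smt (verit) powr_ge_zero)
next
  case False
  then have "1/2 \<le> \<bar>t - 1\<bar>" by linarith
  then have "(1/2) powr p \<le> \<bar>t - 1\<bar> powr p" using assms by (intro powr_mono2) auto
  then show ?thesis by (smt (verit) powr_ge_zero)
qed

lemma main_bound:
  fixes n :: nat and p :: real
  assumes n: "1 \<le> n" and p: "1 \<le> p" and est: "estimator n Tn"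
  shows "ennreal ((1/2) powr p / 512 / sqrt (real n)) \<le>
    (SUP \<mu>\<in>P_Lip. INF T0\<in>{T. is_ot_map \<mu> nu_half T}. risk p n Tn \<mu> T0)"
proof -
  define e where "e = 1 / sqrt (real n)"
  have e: "0 < e" "e \<le> 1" using n by (auto simp: e_def)
  have e0: "0 \<le> e" using e by simp
  have e2: "e\<^sup>2 = 1 / real n" using n by (simp add: e_def power_divide)
  define b where "b = e/32"
  have b: "0 < b" "b \<le> 1/32" using e by (auto simp: b_def)
  define R where "R = {0<..b}"
  have R[measurable]: "R \<in> sets borel" by (simp add: R_def)
  define P0 where "P0 = PiM {..<n} (\<lambda>_. Me 0)"
  define L where "L X = (\<Prod>i<n. ennreal (ell e (X i)))" for X
  define \<phi> where "\<phi> a X = (\<integral>\<^sup>+ x. indicator R x * ennreal (\<bar>Tn X x - a\<bar> powr p) \<partial>Me 0)" for a X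
  have \<phi>m: "\<phi> a \<in> borel_measurable P0" for a
    unfolding \<phi>_def[abs_def] P0_def by (rule phi_meas[OF est R])
  have Lm: "L \<in> borel_measurable P0" unfolding L_def[abs_def] P0_def by (rule Lmeas)
  have P1: "PiM {..<n} (\<lambda>_. Me e) = density P0 L"
    unfolding P0_def L_def[abs_def] by (rule PiM_Me[OF e0 e(2)])
  obtain m1 where m1: "b < m1" "emeasure (Me e) {..m1} = 1/2"
    using median1[OF e] unfolding b_def by blast
  have spP: "space (PiM {..<n} (\<lambda>_. Me e')) = space P0" for e'
    unfolding P0_def by (simp add: space_PiM)
  define S where "S = (SUP \<mu>\<in>P_Lip. INF T0\<in>{T. is_ot_map \<mu> nu_half T}. risk p n Tn \<mu> T0)"

  have I0: "(\<integral>\<^sup>+ X. \<phi> 1 X \<partial>P0) \<le> (INF T0\<in>{T. is_ot_map (Me 0) nu_half T}. risk p n Tn (Me 0) T0)"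
  proof (rule INF_greatest)
    fix T0 assume "T0 \<in> {T. is_ot_map (Me 0) nu_half T}"
    then have AE0: "AE x in Me 0. T0 x = (if 0 < x then 1 else 0)" using ot0 by simp
    show "(\<integral>\<^sup>+ X. \<phi> 1 X \<partial>P0) \<le> risk p n Tn (Me 0) T0"
      unfolding risk_def P0_def
    proof (rule nn_integral_mono)
      fix X
      have "AE x in Me 0. indicator R x * ennreal (\<bar>Tn X x - 1\<bar> powr p) \<le> ennreal (\<bar>Tn X x - T0 x\<bar> powr p)"
        using AE0 by eventually_elim (auto simp: R_def indicator_def)
      then show "\<phi> 1 X \<le> (\<integral>\<^sup>+ x. ennreal (\<bar>Tn X x - T0 x\<bar> powr p) \<partial>Me 0)"
        unfolding \<phi>_def by (rule nn_integral_mono_AE)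
    qed
  qed

  have I1: "(\<integral>\<^sup>+ X. L X * \<phi> 0 X \<partial>P0) \<le> (INF T1\<in>{T. is_ot_map (Me e) nu_half T}. risk p n Tn (Me e) T1)"
  proof (rule INF_greatest)
    fix T1 assume "T1 \<in> {T. is_ot_map (Me e) nu_half T}"
    then have AE1: "AE x in Me e. T1 x = (if m1 < x then 1 else 0)" using ot1[OF e0 e(2) m1(2)] by simp
    have "(\<integral>\<^sup>+ X. L X * \<phi> 0 X \<partial>P0) = (\<integral>\<^sup>+ X. \<phi> 0 X \<partial>density P0 L)"
      by (rule nn_integral_density[symmetric]) (use Lm \<phi>m in auto)
    also have "\<dots> = (\<integral>\<^sup>+ X. \<phi> 0 X \<partial>PiM {..<n} (\<lambda>_. Me e))" by (simp add: P1)
    also have "\<dots> \<le> risk p n Tn (Me e) T1"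
      unfolding risk_def
    proof (rule nn_integral_mono)
      fix X assume X: "X \<in> space (PiM {..<n} (\<lambda>_. Me e))"
      have Tm[measurable]: "Tn X \<in> borel_measurable borel" by (rule sec_meas[OF est X])
      have "\<phi> 0 X \<le> (\<integral>\<^sup>+ x. ennreal (ell e x) * (indicator R x * ennreal (\<bar>Tn X x - 0\<bar> powr p)) \<partial>Me 0)"
        unfolding \<phi>_def
      proof (rule nn_integral_mono)
        fix x
        show "indicator R x * ennreal (\<bar>Tn X x - 0\<bar> powr p) \<le> ennreal (ell e x) * (indicator R x * ennreal (\<bar>Tn X x - 0\<bar> powr p))"
        proof (cases "x \<in> R")
          case True
          then have "0 \<le> bump x / hat x" using bump_pos[of x] hat_nonneg[of x] by (auto simp: R_def)
          then have "0 \<le> e * (bump x / hat x)" using e0 by (rule mult_nonneg_nonneg[rotated])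
          then have "1 \<le> ell e x" unfolding ell_def by linarith
          then have "1 \<le> ennreal (ell e x)" by (simp add: ennreal_leI)
          then show ?thesis
            using mult_right_mono[of 1 "ennreal (ell e x)" "indicator R x * ennreal (\<bar>Tn X x - 0\<bar> powr p)"] by simp
        qed simp
      qed
      also have "\<dots> = (\<integral>\<^sup>+ x. indicator R x * ennreal (\<bar>Tn X x - 0\<bar> powr p) \<partial>Me e)"
        by (rule Me_ell[symmetric, OF e0 e(2)]) measurable
      also have "\<dots> \<le> (\<integral>\<^sup>+ x. ennreal (\<bar>Tn X x - T1 x\<bar> powr p) \<partial>Me e)"
      proof (rule nn_integral_mono_AE)
        show "AE x in Me e. indicator R x * ennreal (\<bar>Tn X x - 0\<bar> powr p) \<le> ennreal (\<bar>Tn X x - T1 x\<bar> powr p)"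
          using AE1 by eventually_elim (use m1(1) in \<open>auto simp: R_def indicator_def\<close>)
      qed
      finally show "\<phi> 0 X \<le> (\<integral>\<^sup>+ x. ennreal (\<bar>Tn X x - T1 x\<bar> powr p) \<partial>Me e)" .
    qed
    finally show "(\<integral>\<^sup>+ X. L X * \<phi> 0 X \<partial>P0) \<le> risk p n Tn (Me e) T1" .
  qed
  define K where "K = ennreal ((1/2) powr p) * emeasure (Me 0) R"
  have comb: "min 1 (L X) * K \<le> \<phi> 1 X + L X * \<phi> 0 X" if X: "X \<in> space P0" for X
  proof -
    have X': "X \<in> space (PiM {..<n} (\<lambda>_. Me 0))" using X by (simp add: P0_def)
    have Tm[measurable]: "Tn X \<in> borel_measurable borel" by (rule sec_meas[OF est X'])
    have "K = (\<integral>\<^sup>+ x. ennreal ((1/2) powr p) * indicator R x \<partial>Me 0)"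
      unfolding K_def by (rule nn_integral_cmult_indicator[symmetric]) simp
    also have "\<dots> \<le> (\<integral>\<^sup>+ x. indicator R x * ennreal (\<bar>Tn X x - 1\<bar> powr p) + indicator R x * ennreal (\<bar>Tn X x - 0\<bar> powr p) \<partial>Me 0)"
    proof (rule nn_integral_mono)
      fix x
      have "(1/2) powr p \<le> \<bar>Tn X x - 1\<bar> powr p + \<bar>Tn X x - 0\<bar> powr p"
        using powr_pair[of p "Tn X x"] p by simp
      then have "ennreal ((1/2) powr p) \<le> ennreal (\<bar>Tn X x - 1\<bar> powr p + \<bar>Tn X x - 0\<bar> powr p)"
        by (rule ennreal_leI)
      also have "\<dots> = ennreal (\<bar>Tn X x - 1\<bar> powr p) + ennreal (\<bar>Tn X x - 0\<bar> powr p)"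
        by (rule ennreal_plus) auto
      finally have "ennreal ((1/2) powr p) \<le> ennreal (\<bar>Tn X x - 1\<bar> powr p) + ennreal (\<bar>Tn X x - 0\<bar> powr p)" .
      then show "ennreal ((1/2) powr p) * indicator R x \<le> indicator R x * ennreal (\<bar>Tn X x - 1\<bar> powr p) + indicator R x * ennreal (\<bar>Tn X x - 0\<bar> powr p)"
        by (auto simp: indicator_def)
    qed
    also have "\<dots> = \<phi> 1 X + \<phi> 0 X" unfolding \<phi>_def by (rule nn_integral_add) (auto intro!: Me_meas)
    finally have K: "K \<le> \<phi> 1 X + \<phi> 0 X" .
    have "min 1 (L X) * K \<le> min 1 (L X) * (\<phi> 1 X + \<phi> 0 X)" using K by (rule mult_left_mono) simp
    also have "\<dots> = min 1 (L X) * \<phi> 1 X + min 1 (L X) * \<phi> 0 X" by (simp add: distrib_left)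
    also have "\<dots> \<le> \<phi> 1 X + L X * \<phi> 0 X"
    proof (rule add_mono)
      show "min 1 (L X) * \<phi> 1 X \<le> \<phi> 1 X" using mult_right_mono[of "min 1 (L X)" 1 "\<phi> 1 X"] by simp
      show "min 1 (L X) * \<phi> 0 X \<le> L X * \<phi> 0 X" by (rule mult_right_mono) simp_all
    qed
    finally show ?thesis .
  qed
  have minL: "ennreal (1/4) \<le> (\<integral>\<^sup>+ X. min 1 (L X) \<partial>P0)"
  proof (rule intmin[OF Lm])
    show "(\<integral>\<^sup>+ X. L X \<partial>P0) = 1" unfolding L_def P0_def by (rule intL[OF e0 e(2)])
    have "(\<integral>\<^sup>+ X. (L X)\<^sup>2 \<partial>P0) \<le> ennreal ((1 + e\<^sup>2) ^ n)" unfolding L_def P0_def by (rule intL2[OF e0 e(2)])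
    also have "\<dots> \<le> ennreal 3" unfolding e2 by (rule ennreal_leI) (rule exp_bound[OF n])
    finally show "(\<integral>\<^sup>+ X. (L X)\<^sup>2 \<partial>P0) \<le> 3" by simp
  qed
  have minm: "(\<lambda>X. min 1 (L X)) \<in> borel_measurable P0" using Lm by (intro borel_measurable_min) auto
  have S0: "(INF T0\<in>{T. is_ot_map (Me 0) nu_half T}. risk p n Tn (Me 0) T0) \<le> S"
    unfolding S_def by (rule SUP_upper) (rule Me_PLip, auto)
  have S1: "(INF T0\<in>{T. is_ot_map (Me e) nu_half T}. risk p n Tn (Me e) T0) \<le> S"
    unfolding S_def by (rule SUP_upper) (rule Me_PLip[OF e0 e(2)])
  have "ennreal (1/4) * K \<le> (\<integral>\<^sup>+ X. min 1 (L X) \<partial>P0) * K" using minL by (rule mult_right_mono) simp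
  also have "\<dots> = (\<integral>\<^sup>+ X. min 1 (L X) * K \<partial>P0)" by (rule nn_integral_multc[symmetric, OF minm])
  also have "\<dots> \<le> (\<integral>\<^sup>+ X. \<phi> 1 X + L X * \<phi> 0 X \<partial>P0)" by (rule nn_integral_mono) (rule comb)
  also have "\<dots> = (\<integral>\<^sup>+ X. \<phi> 1 X \<partial>P0) + (\<integral>\<^sup>+ X. L X * \<phi> 0 X \<partial>P0)"
    by (rule nn_integral_add) (use \<phi>m Lm in auto)
  also have "\<dots> \<le> S + S" using I0 I1 S0 S1 by (intro add_mono) auto
  finally have KS: "ennreal (1/4) * K \<le> S + S" .
  have mR: "ennreal (1/2) * ennreal b \<le> emeasure (Me 0) R"
  proof -
    have "ennreal (1/2) * ennreal b = (\<integral>\<^sup>+ x. ennreal (1/2) * indicator R x \<partial>lborel)"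
      using b by (simp add: R_def nn_integral_cmult_indicator)
    also have "\<dots> \<le> (\<integral>\<^sup>+ x. ennreal (hat x + 0 * bump x) * indicator R x \<partial>lborel)"
    proof (rule nn_integral_mono)
      fix x show "ennreal (1/2) * indicator R x \<le> ennreal (hat x + 0 * bump x) * indicator R x"
      proof (cases "x \<in> R")
        case True
        then have "1/2 \<le> hat x + 0 * bump x" using b by (auto simp: R_def hat_def)
        then have "ennreal (1/2) \<le> ennreal (hat x + 0 * bump x)" by (rule ennreal_leI)
        then show ?thesis using True by simp
      qed simp
    qed
    also have "\<dots> = emeasure (Me 0) R" by (rule Me_emeasure[symmetric]) simp
    finally show ?thesis .
  qed
  define c0 where "c0 = 1/4 * ((1/2) powr p * (1/2 * b))"
  have "ennreal c0 = ennreal (1/4) * (ennreal ((1/2) powr p) * (ennreal (1/2) * ennreal b))"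
  proof -
    have m1: "ennreal c0 = ennreal (1/4) * ennreal ((1/2) powr p * (1/2 * b))" unfolding c0_def by (rule ennreal_mult) (use b in auto)
    have m2: "ennreal ((1/2) powr p * (1/2 * b)) = ennreal ((1/2) powr p) * ennreal (1/2 * b)" by (rule ennreal_mult) (use b in auto)
    have m3: "ennreal (1/2 * b) = ennreal (1/2) * ennreal b" by (rule ennreal_mult) (use b in auto)
    show ?thesis by (simp only: m1 m2 m3)
  qed
  also have "\<dots> \<le> ennreal (1/4) * K"
    unfolding K_def by (intro mult_left_mono mR) auto
  finally have "ennreal c0 \<le> S + S" using KS by simp
  then have "ennreal (c0 / 2) \<le> S" by (rule half_bound) (use b in \<open>simp add: c0_def\<close>)
  moreover have "c0 / 2 = (1/2) powr p / 512 / sqrt (real n)"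
    by (simp add: c0_def b_def e_def)
  ultimately show ?thesis unfolding S_def by simp
qed

theorem theorem5p3:
  fixes p :: real
  assumes "1 \<le> p"
  shows "\<exists>c>0. \<forall>\<^sub>F n in sequentially. \<forall>Tn. estimator n Tn \<longrightarrow>
           ennreal (c / sqrt (real n)) \<le>
             (SUP \<mu>\<in>P_Lip. INF T0\<in>{T. is_ot_map \<mu> nu_half T}. risk p n Tn \<mu> T0)"
proof (intro exI[of _ "(1/2) powr p / 512"] conjI)
  show "0 < (1/2::real) powr p / 512" by simp
  show "\<forall>\<^sub>F n in sequentially. \<forall>Tn. estimator n Tn \<longrightarrow>
           ennreal ((1/2) powr p / 512 / sqrt (real n)) \<le>
             (SUP \<mu>\<in>P_Lip. INF T0\<in>{T. is_ot_map \<mu> nu_half T}. risk p n Tn \<mu> T0)"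
    using eventually_ge_at_top[of "1::nat"]
  proof eventually_elim
    case (elim n)
    show ?case using main_bound[OF elim assms] by blast
  qed
qed

end
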